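(* Let $A',B'$ be subspaces of a finite-dimensional Hilbert space $\mathcal{H}$, with orthogonal projectors $\Pi_{A'},\Pi_{B'}$, and let $0\le\epsilon<1$. Then there exists a (possibly zero) subspace $A\subseteq A'$ with the following properties. (a) For all $v\in A$, $\|\Pi_{B'}v\|_2^2\ge(1-\sqrt{\epsilon})\|v\|_2^2$. (b) Letting $B\subseteq B'$ be the subspace spanned by the vectors $\Pi_{B'}v$, $v\in A$, and $\Pi_B$ its orthogonal projector, $\Pi_B\le(1-\sqrt{\epsilon})^{-1}\Pi_{B'}\Pi_{A'}\Pi_{B'}$ (in the positive semidefinite order). (c) If $\rho$ is any positive operator with $\operatorname{Tr}\rho\le 1$, support contained in $A'$, and $\operatorname{Tr}[\rho\Pi_{B'}]\ge1-\epsilon$, then $A$ is nonzero and $\operatorname{Tr}[\rho\,\Pi_B]\ge1-2\sqrt{\epsilon}$. *)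

theory Defs
  imports "HOL-Analysis.Analysis"
begin

text \<open>The finite-dimensional Hilbert space is modelled as complex^'n ('n a finite index type),
  with the standard inner product; its norm coincides with the library norm on complex^'n.
  Operators are complex matrices complex^'n^'n acting by *v.\<close>

definition cinner :: "complex^'n \<Rightarrow> complex^'n \<Rightarrow> complex" where
  "cinner x y = (\<Sum>i\<in>UNIV. cnj (x$i) * y$i)"

definition csubspace :: "(complex^'n) set \<Rightarrow> bool" where
  "csubspace S \<longleftrightarrow> 0 \<in> S \<and> (\<forall>x\<in>S. \<forall>y\<in>S. x + y \<in> S) \<and> (\<forall>c. \<forall>x\<in>S. c *s x \<in> S)"

definition cspan :: "(complex^'n) set \<Rightarrow> (complex^'n) set" where
  "cspan S = {x. \<exists>F c. finite F \<and> F \<subseteq> S \<and> x = (\<Sum>v\<in>F. c v *s v)}"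

definition is_proj :: "complex^'n^'n \<Rightarrow> (complex^'n) set \<Rightarrow> bool" where
  "is_proj P S \<longleftrightarrow> (\<forall>x. P *v x \<in> S \<and> (\<forall>y\<in>S. cinner y (x - P *v x) = 0))"

definition psd :: "complex^'n^'n \<Rightarrow> bool" where
  "psd M \<longleftrightarrow> (\<forall>x. Im (cinner x (M *v x)) = 0 \<and> Re (cinner x (M *v x)) \<ge> 0)"

definition loewner_le :: "complex^'n^'n \<Rightarrow> complex^'n^'n \<Rightarrow> bool" where
  "loewner_le A B \<longleftrightarrow> psd (B - A)"

end

theory Submission
  imports Defs
begin


lemma cinner_add_right: "cinner x (y + z) = cinner x y + cinner x z"
  by (simp add: cinner_def distrib_left sum.distrib)
lemma cinner_add_left: "cinner (x + y) z = cinner x z + cinner y z"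
  by (simp add: cinner_def distrib_right sum.distrib)
lemma cinner_diff_right: "cinner x (y - z) = cinner x y - cinner x z"
  by (simp add: cinner_def right_diff_distrib sum_subtractf)
lemma cinner_diff_left: "cinner (x - y) z = cinner x z - cinner y z"
  by (simp add: cinner_def left_diff_distrib sum_subtractf)
lemma cinner_scale_right: "cinner x (c *s y) = c * cinner x y"
  by (simp add: cinner_def sum_distrib_left mult_ac)
lemma cinner_scale_left: "cinner (c *s x) y = cnj c * cinner x y"
  by (simp add: cinner_def sum_distrib_left mult_ac)
lemma cinner_zero_right[simp]: "cinner x 0 = 0"
  by (simp add: cinner_def)
lemma cinner_zero_left[simp]: "cinner 0 x = 0"
  by (simp add: cinner_def)
lemma cinner_commute: "cinner y x = cnj (cinner x y)"
  by (simp add: cinner_def mult.commute)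
lemma cinner_sum_right: "cinner x (\<Sum>k\<in>K. f k) = (\<Sum>k\<in>K. cinner x (f k))"
  by (induction K rule: infinite_finite_induct) (auto simp: cinner_add_right)
lemma cinner_sum_left: "cinner (\<Sum>k\<in>K. f k) x = (\<Sum>k\<in>K. cinner (f k) x)"
  by (induction K rule: infinite_finite_induct) (auto simp: cinner_add_left)

lemma norm_sq_vec: "(norm (x::complex^'n))\<^sup>2 = (\<Sum>i\<in>UNIV. (norm (x$i))\<^sup>2)"
  by (simp add: norm_vec_def L2_set_def sum_nonneg)

lemma cinner_self: "cinner x x = complex_of_real ((norm x)\<^sup>2)"
proof -
  have "cinner x x = (\<Sum>i\<in>UNIV. complex_of_real ((norm (x$i))\<^sup>2))"
    unfolding cinner_def by (intro sum.cong refl) (metis complex_norm_square mult.commute)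
  also have "\<dots> = complex_of_real ((norm x)\<^sup>2)" by (simp add: norm_sq_vec)
  finally show ?thesis .
qed

lemma cinner_self_eq_0: "cinner x x = 0 \<longleftrightarrow> x = 0"
  by (simp add: cinner_self)

lemma cinner_ext: "(\<And>z. cinner z u = cinner z w) \<Longrightarrow> u = w"
proof -
  assume h: "\<And>z. cinner z u = cinner z w"
  have "cinner (u - w) (u - w) = 0" using h[of "u-w"] by (simp add: cinner_diff_right)
  thus ?thesis by (simp add: cinner_self_eq_0)
qed

lemma mv_scale: "(A::complex^'n^'m) *v (c *s x) = c *s (A *v x)"
  by (rule vector_scalar_commute)
lemma mv_sum: "(A::complex^'n^'m) *v (\<Sum>k\<in>K. f k) = (\<Sum>k\<in>K. A *v f k)"
  by (induction K rule: infinite_finite_induct) (auto simp: matrix_vector_right_distrib)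
lemma scaleR_mv: "((r::real) *\<^sub>R (A::complex^'n^'m)) *v x = complex_of_real r *s (A *v x)"
  by (simp add: vec_eq_iff matrix_vector_mult_def sum_distrib_left of_real_def mult_ac)
lemma scaleR_vec_s: "(r::real) *\<^sub>R (x::complex^'n) = complex_of_real r *s x"
  by (simp add: vec_eq_iff of_real_def)

lemma csubspace_subspace: "csubspace S \<Longrightarrow> subspace S"
  unfolding csubspace_def subspace_def by (auto simp: scaleR_vec_s)

lemma csubspace_sum: "csubspace S \<Longrightarrow> (\<And>k. k \<in> K \<Longrightarrow> f k \<in> S) \<Longrightarrow> (\<Sum>k\<in>K. f k) \<in> S"
  using subspace_sum[OF csubspace_subspace] by blast
lemma csubspace_scale: "csubspace S \<Longrightarrow> x \<in> S \<Longrightarrow> c *s x \<in> S"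
  unfolding csubspace_def by auto
lemma csubspace_add: "csubspace S \<Longrightarrow> x \<in> S \<Longrightarrow> y \<in> S \<Longrightarrow> x + y \<in> S"
  unfolding csubspace_def by auto
lemma csubspace_0: "csubspace S \<Longrightarrow> 0 \<in> S"
  unfolding csubspace_def by auto
lemma csubspace_diff: "csubspace S \<Longrightarrow> x \<in> S \<Longrightarrow> y \<in> S \<Longrightarrow> x - y \<in> S"
  using subspace_diff[OF csubspace_subspace] by blast



definition herm :: "complex^'n^'n \<Rightarrow> bool" where
  "herm M \<longleftrightarrow> (\<forall>x y. cinner x (M *v y) = cinner (M *v x) y)"

lemma cinner_expand_sq: "cinner (x + y) (M *v (x + y)) =
   cinner x (M *v x) + cinner y (M *v y) + cinner x (M *v y) + cinner y (M *v x)"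
  by (simp add: matrix_vector_right_distrib cinner_add_left cinner_add_right)

lemma psd_herm: assumes "psd M" shows "herm M"
  unfolding herm_def
proof (intro allI)
  fix x y :: "complex^'a"
  let ?a = "cinner y (M *v x)" and ?b = "cinner x (M *v y)"
  have q: "\<And>z. Im (cinner z (M *v z)) = 0" using assms unfolding psd_def by blast
  have 1: "Im (?a + ?b) = 0"
    using q[of "y+x"] q[of x] q[of y] by (simp add: cinner_expand_sq)
  have "cinner (\<i> *s y + x) (M *v (\<i> *s y + x)) =
     cinner (\<i> *s y) (M *v (\<i> *s y)) + cinner x (M *v x) + (- \<i>) * ?a + \<i> * ?b"
    by (simp add: cinner_expand_sq cinner_scale_left cinner_scale_right mv_scale)
  hence 2: "Im ((- \<i>) * ?a + \<i> * ?b) = 0"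
    using q[of "\<i> *s y + x"] q[of x] q[of "\<i> *s y"] by simp
  have "?b = cnj ?a" using 1 2 by (simp add: complex_eq_iff)
  thus "cinner x (M *v y) = cinner (M *v x) y" by (simp add: cinner_commute[of "M *v x"])
qed

lemma herm_real: "herm M \<Longrightarrow> Im (cinner x (M *v x)) = 0"
  unfolding herm_def by (metis cinner_commute cnj.simps(2) neg_equal_zero)

lemma norm_sq_cinner: "(norm x)\<^sup>2 = Re (cinner x x)"
  by (simp add: cinner_self)

context
  fixes P :: "complex^'n^'n" and S
  assumes S: "csubspace S" and P: "is_proj P S"
begin

lemma proj_in: "P *v x \<in> S" using P unfolding is_proj_def by blast
lemma proj_orth: "y \<in> S \<Longrightarrow> cinner y (x - P *v x) = 0" using P unfolding is_proj_def by blast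
lemma proj_orth': "y \<in> S \<Longrightarrow> cinner (x - P *v x) y = 0"
  using proj_orth by (metis cinner_commute complex_cnj_zero)
lemma proj_fix: assumes "y \<in> S" shows "P *v y = y"
proof -
  have "y - P *v y \<in> S" using csubspace_diff[OF S assms proj_in] .
  hence "cinner (y - P *v y) (y - P *v y) = 0" using proj_orth by blast
  thus ?thesis by (simp add: cinner_self_eq_0)
qed
lemma proj_herm: "cinner x (P *v y) = cinner (P *v x) y"
proof -
  have "cinner x (P *v y) = cinner (P *v x) (P *v y) + cinner (x - P *v x) (P *v y)"
    by (simp add: cinner_diff_left)
  also have "\<dots> = cinner (P *v x) (P *v y)" using proj_orth'[OF proj_in] by simp
  also have "\<dots> = cinner (P *v x) y - cinner (P *v x) (y - P *v y)" by (simp add: cinner_diff_right)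
  also have "\<dots> = cinner (P *v x) y" using proj_orth[OF proj_in] by simp
  finally show ?thesis .
qed
lemma proj_herm': "herm P" unfolding herm_def using proj_herm by blast
lemma proj_idem: "P *v (P *v x) = P *v x" using proj_fix[OF proj_in] .
lemma proj_sq: "cinner (P *v x) (P *v y) = cinner x (P *v y)"
  by (metis proj_herm proj_idem)
lemma proj_unique: assumes "y \<in> S" "\<And>s. s \<in> S \<Longrightarrow> cinner s (x - y) = 0" shows "P *v x = y"
proof -
  have d: "P *v x - y \<in> S" using csubspace_diff[OF S proj_in assms(1)] .
  have "cinner (P *v x - y) (P *v x - y) = cinner (P *v x - y) (x - y) - cinner (P *v x - y) (x - P *v x)"
    by (simp add: cinner_diff_right algebra_simps)
  also have "\<dots> = 0" using assms(2)[OF d] proj_orth[OF d] by simp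
  finally show ?thesis by (simp add: cinner_self_eq_0)
qed
lemma proj_norm_le: "(norm (P *v x))\<^sup>2 \<le> (norm x)\<^sup>2"
proof -
  define r where "r = x - P *v x"
  have x: "x = P *v x + r" by (simp add: r_def)
  have "cinner x x = cinner (P *v x + r) (P *v x + r)" using x by simp
  also have "\<dots> = cinner (P *v x) (P *v x) + cinner r r"
  proof -
    have h: "cinner (P *v x) r = 0" "cinner r (P *v x) = 0"
      using proj_orth[OF proj_in, of x x] proj_orth'[OF proj_in, of x x] by (simp_all add: r_def)
    show ?thesis by (simp add: cinner_add_left cinner_add_right h)
  qed
  finally have "Re (cinner x x) = Re (cinner (P *v x) (P *v x)) + Re (cinner r r)"
    by simp
  thus ?thesis by (simp add: norm_sq_cinner[symmetric])
qed
end



lemma f_cont: "continuous_on UNIV (\<lambda>x::complex^'n. Re (cinner x ((M::complex^'n^'n) *v x)))"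
  unfolding cinner_def matrix_vector_mult_def
  by (intro continuous_intros linear_continuous_on bounded_linear_vec_nth) 

lemma key_ineq:
  fixes n2 c :: real
  assumes "n2 \<ge> 0" "\<And>t. t > 0 \<Longrightarrow> 2 * t * n2 + t\<^sup>2 * c \<le> 0"
  shows "n2 = 0"
proof (rule ccontr)
  assume "n2 \<noteq> 0" hence p: "n2 > 0" using assms(1) by simp
  define t where "t = n2 / (\<bar>c\<bar> + 1)"
  have t: "t > 0" using p by (simp add: t_def)
  have "t * \<bar>c\<bar> \<le> n2" using p by (simp add: t_def field_simps)
  hence "t\<^sup>2 * \<bar>c\<bar> \<le> t * n2" using t by (simp add: power2_eq_square mult.assoc mult_left_mono)
  moreover have "t\<^sup>2 * (- \<bar>c\<bar>) \<le> t\<^sup>2 * c" by (intro mult_left_mono) auto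
  moreover have "t * n2 > 0" using t p by simp
  ultimately have "2 * t * n2 + t\<^sup>2 * c > 0" by linarith
  thus False using assms(2)[OF t] by simp
qed

lemma eigvec_exists:
  fixes M :: "complex^'n^'n"
  assumes H: "herm M" and S: "csubspace S" and inv: "\<forall>x\<in>S. M *v x \<in> S" and nz: "S \<noteq> {0}"
  shows "\<exists>e l. e \<in> S \<and> cinner e e = 1 \<and> M *v e = complex_of_real l *s e"
proof -
  define f where "f x = Re (cinner x (M *v x))" for x
  define K where "K = S \<inter> sphere 0 1"
  have cK: "compact K" unfolding K_def
    by (intro closed_Int_compact closed_subspace csubspace_subspace S compact_sphere)
  obtain x where x: "x \<in> S" "x \<noteq> 0" using nz csubspace_0[OF S] by blast
  have "(1 / norm x) *\<^sub>R x \<in> K" using x subspace_scale[OF csubspace_subspace[OF S]] unfolding K_def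
    by auto
  hence neK: "K \<noteq> {}" by blast
  have "continuous_on K f" unfolding f_def by (rule continuous_on_subset[OF f_cont]) simp
  then obtain e where eK: "e \<in> K" and emax: "\<And>y. y \<in> K \<Longrightarrow> f y \<le> f e"
    using continuous_attains_sup[OF cK neK] by blast
  define l where "l = f e"
  have eS: "e \<in> S" and ne: "norm e = 1" using eK by (auto simp: K_def)
  have ee: "cinner e e = 1" using ne by (simp add: cinner_self)
  have fscale: "f (complex_of_real r *s y) = r\<^sup>2 * f y" for r y
    by (simp add: f_def mv_scale cinner_scale_left cinner_scale_right power2_eq_square)
  have nscale: "Re (cinner (complex_of_real r *s y) (complex_of_real r *s y)) = r\<^sup>2 * Re (cinner y y)" for r y
    by (simp add: cinner_scale_left cinner_scale_right power2_eq_square)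
  have bound: "f y \<le> l * Re (cinner y y)" if yS: "y \<in> S" for y
  proof (cases "y = 0")
    case True thus ?thesis by (simp add: f_def)
  next
    case False
    define u where "u = (1 / norm y) *\<^sub>R y"
    have uK: "u \<in> K" using False yS subspace_scale[OF csubspace_subspace[OF S]] unfolding K_def u_def
      by auto
    have "y = norm y *\<^sub>R u" using False by (simp add: u_def)
    hence y: "y = complex_of_real (norm y) *s u" by (simp add: scaleR_vec_s)
    have "f y = (norm y)\<^sup>2 * f u" by (subst y, rule fscale)
    also have "\<dots> \<le> (norm y)\<^sup>2 * l" using emax[OF uK] by (simp add: l_def mult_left_mono)
    finally show ?thesis by (simp add: norm_sq_cinner mult.commute)
  qed
  define w where "w = M *v e - complex_of_real l *s e"
  have wS: "w \<in> S" unfolding w_def using inv eS S by (simp add: csubspace_diff csubspace_scale)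
  have Me: "M *v e = w + complex_of_real l *s e" by (simp add: w_def)
  have h1: "cinner e (M *v w) = cinner w w + complex_of_real l * cinner e w"
    using H unfolding herm_def by (simp add: Me cinner_add_left cinner_scale_left)
  have h2: "cinner w (M *v e) = cinner w w + complex_of_real l * cinner w e"
    by (simp add: Me cinner_add_right cinner_scale_right)
  have h3: "Re (cinner e (M *v e)) = l" by (simp add: l_def f_def)
  have h4: "Re (cinner e w) = 0" using h3 ee by (simp add: w_def cinner_diff_right cinner_scale_right)
  have h5: "Re (cinner w e) = 0" using h4 by (subst cinner_commute) simp
  define n2 where "n2 = Re (cinner w w)"
  define c where "c = Re (cinner w (M *v w)) - l * n2"
  have "2 * t * n2 + t\<^sup>2 * c \<le> 0" if "t > 0" for t
  proof -
    define z where "z = e + complex_of_real t *s w"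
    have zS: "z \<in> S" unfolding z_def using S eS wS by (simp add: csubspace_add csubspace_scale)
    have A: "Re (cinner z (M *v z)) = l + 2 * t * n2 + t\<^sup>2 * Re (cinner w (M *v w))"
      unfolding z_def using h1 h2 h3 h4 h5
      by (simp add: matrix_vector_right_distrib mv_scale cinner_add_left cinner_add_right
          cinner_scale_left cinner_scale_right n2_def power2_eq_square algebra_simps)
    have B: "Re (cinner z z) = 1 + t\<^sup>2 * n2"
      unfolding z_def using h4 h5 ee
      by (simp add: cinner_add_left cinner_add_right
          cinner_scale_left cinner_scale_right n2_def power2_eq_square algebra_simps)
    have "f z \<le> l * Re (cinner z z)" using bound[OF zS] .
    thus ?thesis using A B by (simp add: f_def c_def algebra_simps)
  qed
  moreover have "n2 \<ge> 0" by (simp add: n2_def norm_sq_cinner[symmetric])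
  ultimately have "n2 = 0" using key_ineq by blast
  hence "w = 0" by (metis n2_def norm_sq_cinner power_eq_0_iff norm_eq_zero zero_neq_numeral)
  hence "M *v e = complex_of_real l *s e" by (simp add: w_def)
  thus ?thesis using eS ee by blast
qed



definition onb :: "(complex^'n) set \<Rightarrow> bool" where
  "onb E \<longleftrightarrow> finite E \<and> (\<forall>e\<in>E. cinner e e = 1) \<and> (\<forall>e\<in>E. \<forall>e'\<in>E. e \<noteq> e' \<longrightarrow> cinner e e' = 0)"

lemma spectral:
  fixes M :: "complex^'n^'n"
  assumes H: "herm M"
  shows "csubspace S \<Longrightarrow> \<forall>x\<in>S. M *v x \<in> S \<Longrightarrow> \<exists>E lam. onb E \<and> E \<subseteq> S \<and>
     (\<forall>e\<in>E. M *v e = complex_of_real (lam e) *s e) \<and> (\<forall>x\<in>S. x = (\<Sum>e\<in>E. cinner e x *s e))"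
proof (induction "dim S" arbitrary: S rule: less_induct)
  case less
  show ?case
  proof (cases "S = {0}")
    case True
    show ?thesis by (rule exI[of _ "{}"]) (auto simp: True onb_def)
  next
    case False
    obtain e l where eS: "e \<in> S" and ee: "cinner e e = 1" and Me: "M *v e = complex_of_real l *s e"
      using eigvec_exists[OF H less.prems False] by blast
    define S' where "S' = {x\<in>S. cinner e x = 0}"
    have cS': "csubspace S'" using less.prems(1) unfolding S'_def csubspace_def
      by (auto simp: cinner_add_right cinner_scale_right)
    have invS': "\<forall>x\<in>S'. M *v x \<in> S'"
    proof
      fix x assume x: "x \<in> S'"
      have "cinner e (M *v x) = cinner (M *v e) x" using H unfolding herm_def by blast
      also have "\<dots> = 0" using x by (simp add: Me cinner_scale_left S'_def)
      finally show "M *v x \<in> S'" using x less.prems(2) by (simp add: S'_def)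
    qed
    have sub: "S' \<subset> S"
    proof -
      have "e \<notin> S'" using ee by (simp add: S'_def)
      thus ?thesis using eS unfolding S'_def by blast
    qed
    have "dim S' < dim S"
      using sub csubspace_subspace[OF cS'] csubspace_subspace[OF less.prems(1)]
      by (metis dim_psubset span_eq_iff)
    then obtain E' lam' where onb': "onb E'" and E'S: "E' \<subseteq> S'"
      and eig': "\<forall>e\<in>E'. M *v e = complex_of_real (lam' e) *s e"
      and exp': "\<forall>x\<in>S'. x = (\<Sum>e\<in>E'. cinner e x *s e)"
      using less.hyps[OF _ cS' invS'] by blast
    have eE': "e \<notin> E'" using E'S ee by (auto simp: S'_def)
    have orth1: "\<And>e'. e' \<in> E' \<Longrightarrow> cinner e e' = 0" using E'S by (auto simp: S'_def)
    have orth2: "\<And>e'. e' \<in> E' \<Longrightarrow> cinner e' e = 0"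
      using orth1 by (metis cinner_commute complex_cnj_zero)
    define E where "E = insert e E'"
    define lam where "lam = lam'(e := l)"
    have "onb E" using onb' ee orth1 orth2 unfolding onb_def E_def by auto
    moreover have "E \<subseteq> S" using E'S eS sub by (auto simp: E_def)
    moreover have "\<forall>x\<in>E. M *v x = complex_of_real (lam x) *s x"
      using eig' Me eE' by (auto simp: E_def lam_def)
    moreover have "\<forall>x\<in>S. x = (\<Sum>e\<in>E. cinner e x *s e)"
    proof
      fix x assume xS: "x \<in> S"
      define y where "y = x - cinner e x *s e"
      have yS': "y \<in> S'" using xS eS ee less.prems(1)
        by (simp add: y_def S'_def csubspace_diff csubspace_scale cinner_diff_right cinner_scale_right)
      have "y = (\<Sum>e'\<in>E'. cinner e' y *s e')" using exp' yS' by blast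
      also have "\<dots> = (\<Sum>e'\<in>E'. cinner e' x *s e')"
        by (intro sum.cong refl) (simp add: y_def cinner_diff_right cinner_scale_right orth2)
      finally have "x = cinner e x *s e + (\<Sum>e'\<in>E'. cinner e' x *s e')" by (simp add: y_def algebra_simps)
      thus "x = (\<Sum>e\<in>E. cinner e x *s e)"
        using onb' eE' by (simp add: E_def onb_def sum.insert)
    qed
    ultimately show ?thesis by blast
  qed
qed



lemma arith_final:
  fixes E :: "'a set" and r lam :: "'a \<Rightarrow> real" and \<epsilon> :: real
  assumes fin: "finite E" and r: "\<And>e. e \<in> E \<Longrightarrow> r e \<ge> 0"
    and l0: "\<And>e. e \<in> E \<Longrightarrow> lam e \<ge> 0" and l1: "\<And>e. e \<in> E \<Longrightarrow> lam e \<le> 1"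
    and s1: "sum r E \<le> 1" and s2: "(\<Sum>e\<in>E. lam e * r e) \<ge> 1 - \<epsilon>"
    and e0: "0 \<le> \<epsilon>" and e1: "\<epsilon> < 1"
  shows "(\<Sum>e\<in>{e\<in>E. lam e \<ge> 1 - sqrt \<epsilon>}. lam e * r e) \<ge> 1 - 2 * sqrt \<epsilon> \<and>
         (\<Sum>e\<in>{e\<in>E. lam e \<ge> 1 - sqrt \<epsilon>}. lam e * r e) > 0"
proof -
  define s where "s = sqrt \<epsilon>"
  have s0: "s \<ge> 0" and s1': "s < 1" and ss: "\<epsilon> = s\<^sup>2" using e0 e1 by (auto simp: s_def)
  define K where "K = {e\<in>E. lam e \<ge> 1 - s}"
  define N where "N = {e\<in>E. \<not> lam e \<ge> 1 - s}"
  have KN: "K \<inter> N = {}" "K \<union> N = E" by (auto simp: K_def N_def)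
  have fK: "finite K" "finite N" using fin by (auto simp: K_def N_def)
  have split: "sum f E = sum f K + sum f N" for f :: "'a \<Rightarrow> real"
    using sum.union_disjoint[OF fK KN(1)] KN(2) by simp
  define T where "T = (\<Sum>e\<in>K. lam e * r e)"
  define p where "p = sum r K"
  define q where "q = sum r N"
  have Tp: "T \<le> p" unfolding T_def p_def
    by (intro sum_mono) (use l0 l1 r in \<open>auto simp: K_def intro!: mult_left_le_one_le\<close>)
  have Nb: "(\<Sum>e\<in>N. lam e * r e) \<le> (1 - s) * q" unfolding q_def sum_distrib_left
    by (intro sum_mono) (use r in \<open>auto simp: N_def intro: mult_right_mono\<close>)
  have pq: "p + q \<le> 1" using s1 split[of r] by (simp add: p_def q_def)
  have q0: "q \<ge> 0" unfolding q_def using r by (auto simp: N_def intro: sum_nonneg)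
  have main: "1 - s\<^sup>2 \<le> T + (\<Sum>e\<in>N. lam e * r e)" using s2 split[of "\<lambda>e. lam e * r e"] ss
    by (simp add: T_def)
  have "T \<ge> 1 - s"
  proof (cases "s = 0")
    case True
    have nn: "\<forall>e\<in>N. 0 \<le> (1 - lam e) * r e" using r l1 by (auto simp: N_def)
    have "(\<Sum>e\<in>N. (1 - lam e) * r e) = q - (\<Sum>e\<in>N. lam e * r e)"
      by (simp add: q_def left_diff_distrib sum_subtractf)
    moreover have "(\<Sum>e\<in>N. lam e * r e) \<ge> q" using main Tp pq True by simp
    moreover have "(\<Sum>e\<in>N. (1 - lam e) * r e) \<ge> 0" using nn by (simp add: sum_nonneg)
    ultimately have "(\<Sum>e\<in>N. (1 - lam e) * r e) = 0" by simp
    hence z: "\<forall>e\<in>N. (1 - lam e) * r e = 0" using sum_nonneg_eq_0_iff[of N "\<lambda>e. (1 - lam e) * r e"] fK(2) nn by blast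
    have "\<forall>e\<in>N. r e = 0" using z True by (auto simp: N_def)
    hence "(\<Sum>e\<in>N. lam e * r e) = 0" by simp
    thus ?thesis using main True by simp
  next
    case False
    hence sp: "s > 0" using s0 by simp
    have "1 - s\<^sup>2 \<le> T + (1 - s) * q" using main Nb by simp
    also have "\<dots> \<le> T + (1 - s) * (1 - T)" using pq Tp s1' by (intro add_left_mono mult_left_mono) auto
    finally have "s * (1 - s) \<le> s * T" by (simp add: power2_eq_square algebra_simps)
    thus ?thesis using sp by simp
  qed
  hence "T \<ge> 1 - 2 * s" "T > 0" using s1' s0 by linarith+
  thus ?thesis unfolding T_def K_def s_def by blast
qed

lemma trace_expand:
  fixes R X :: "complex^'n^'n"
  assumes fin: "finite E" and R: "\<And>x. R *v x = (\<Sum>e\<in>E. cinner (h e) x *s e)"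
  shows "trace (R ** X) = (\<Sum>e\<in>E. cinner (h e) (X *v e))"
proof -
  have Rij: "R$i$j = (\<Sum>e\<in>E. cnj (h e $ j) * e $ i)" for i j
  proof -
    have "R$i$j = (R *v axis j 1) $ i"
      by (simp add: matrix_vector_mult_def axis_def if_distrib cong: if_cong)
    also have "\<dots> = (\<Sum>e\<in>E. cnj (h e $ j) * e $ i)"
      unfolding R by (simp add: sum_component cinner_def axis_def if_distrib cong: if_cong)
    finally show ?thesis .
  qed
  have "trace (R ** X) = (\<Sum>i\<in>UNIV. \<Sum>j\<in>UNIV. \<Sum>e\<in>E. cnj (h e $ j) * e $ i * X$j$i)"
    by (simp add: trace_def matrix_matrix_mult_def Rij sum_distrib_right)
  also have "\<dots> = (\<Sum>e\<in>E. \<Sum>j\<in>UNIV. \<Sum>i\<in>UNIV. cnj (h e $ j) * e $ i * X$j$i)"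
    by (subst sum.swap) (simp add: sum.swap[of _ E])
  also have "\<dots> = (\<Sum>e\<in>E. cinner (h e) (X *v e))"
    by (simp add: cinner_def matrix_vector_mult_def sum_distrib_left mult_ac)
  finally show ?thesis .
qed



lemma proj_unique':
  assumes P: "is_proj P S" and y: "y \<in> S" and o: "\<And>s. s \<in> S \<Longrightarrow> cinner s (x - y) = 0"
  shows "P *v x = y"
proof -
  have Pin: "P *v x \<in> S" and Po: "\<And>s. s \<in> S \<Longrightarrow> cinner s (x - P *v x) = 0"
    using P unfolding is_proj_def by auto
  have "cinner (P *v x - y) (P *v x - y) = 
     (cinner (P *v x) (x - y) - cinner y (x - y)) - (cinner (P *v x) (x - P *v x) - cinner y (x - P *v x))"
    by (simp add: cinner_diff_right cinner_diff_left algebra_simps)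
  also have "\<dots> = 0" using o[OF Pin] o[OF y] Po[OF Pin] Po[OF y] by simp
  finally show ?thesis by (simp add: cinner_self_eq_0)
qed

lemma sum_scale_left: "(\<Sum>k\<in>K. c k) *s (v::complex^'n) = (\<Sum>k\<in>K. c k *s v)"
  by (induction K rule: infinite_finite_induct) (auto simp: vector_sadd_rdistrib)

lemma cspan_sum:
  assumes fin: "finite K" and f: "\<And>k. k \<in> K \<Longrightarrow> f k \<in> S"
  shows "(\<Sum>k\<in>K. c k *s f k) \<in> cspan S"
proof -
  have "(\<Sum>k\<in>K. c k *s f k) = (\<Sum>v\<in>f ` K. \<Sum>k\<in>{k\<in>K. f k = v}. c k *s f k)"
    by (rule sum.image_gen[OF fin])
  also have "\<dots> = (\<Sum>v\<in>f ` K. (\<Sum>k\<in>{k\<in>K. f k = v}. c k) *s v)"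
    by (intro sum.cong refl) (simp add: sum_scale_left)
  finally have eq: "(\<Sum>k\<in>K. c k *s f k) = (\<Sum>v\<in>f ` K. (\<Sum>k\<in>{k\<in>K. f k = v}. c k) *s v)" .
  show ?thesis unfolding cspan_def
    by (rule CollectI, rule exI[of _ "f ` K"], rule exI[of _ "\<lambda>v. \<Sum>k\<in>{k\<in>K. f k = v}. c k"])
       (use fin f eq in auto)
qed

lemma cspan_orth:
  assumes "\<And>s. s \<in> S \<Longrightarrow> cinner s z = 0" and "b \<in> cspan S"
  shows "cinner b z = 0"
proof -
  obtain F c where "F \<subseteq> S" "b = (\<Sum>v\<in>F. c v *s v)" using assms(2) unfolding cspan_def by blast
  thus ?thesis using assms(1) by (auto simp: cinner_sum_left cinner_scale_left intro!: sum.neutral)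
qed

lemma mult_cnj_sq: "z * cnj z = (complex_of_real (cmod z))\<^sup>2"
  by (metis complex_norm_square of_real_power)

lemma cnj_mult_self: "cnj z * z = complex_of_real ((cmod z)\<^sup>2)"
  by (metis complex_norm_square mult.commute)



theorem lemma4:
  fixes A' B' :: "(complex^'n) set" and PA' PB' :: "complex^'n^'n" and \<epsilon> :: real
  assumes "csubspace A'" and "csubspace B'"
    and "is_proj PA' A'" and "is_proj PB' B'"
    and "0 \<le> \<epsilon>" and "\<epsilon> < 1"
  shows "\<exists>A. csubspace A \<and> A \<subseteq> A' \<and>
      (\<forall>v\<in>A. (norm (PB' *v v))\<^sup>2 \<ge> (1 - sqrt \<epsilon>) * (norm v)\<^sup>2) \<and>
      (\<forall>PB. is_proj PB (cspan ((\<lambda>v. PB' *v v) ` A)) \<longrightarrow>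
         loewner_le PB ((1 / (1 - sqrt \<epsilon>)) *\<^sub>R (PB' ** PA' ** PB')) \<and>
         (\<forall>\<rho>. psd \<rho> \<and> Re (trace \<rho>) \<le> 1 \<and> range (\<lambda>x. \<rho> *v x) \<subseteq> A' \<and>
               Re (trace (\<rho> ** PB')) \<ge> 1 - \<epsilon>
           \<longrightarrow> A \<noteq> {0} \<and> Re (trace (\<rho> ** PB)) \<ge> 1 - 2 * sqrt \<epsilon>))"
proof -
  note SA = assms(1) and SB = assms(2) and PA = assms(3) and PB = assms(4)
  define l0 where "l0 = 1 - sqrt \<epsilon>"
  have l0pos: "l0 > 0" using assms(5,6) by (simp add: l0_def)
  note PAin = proj_in[OF SA PA] and PAfix = proj_fix[OF SA PA] and PAh = proj_herm[OF SA PA]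
  note PBin = proj_in[OF SB PB] and PBfix = proj_fix[OF SB PB] and PBh = proj_herm[OF SB PB]
  note PBsq = proj_sq[OF SB PB] and PAsq = proj_sq[OF SA PA]
  define M where "M = PA' ** PB' ** PA'"
  have Mv: "M *v x = PA' *v (PB' *v (PA' *v x))" for x by (simp add: M_def matrix_vector_mul_assoc matrix_mul_assoc)
  have Mh: "herm M" unfolding herm_def Mv using PAh PBh by metis
  have MA': "\<forall>x\<in>A'. M *v x \<in> A'" using PAin by (simp add: Mv)
  obtain E lam where onbE: "onb E" and EA': "E \<subseteq> A'"
    and eig: "\<forall>e\<in>E. M *v e = complex_of_real (lam e) *s e"
    and expn: "\<forall>x\<in>A'. x = (\<Sum>e\<in>E. cinner e x *s e)"
    using spectral[OF Mh SA MA'] by blast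
  have finE: "finite E" using onbE by (simp add: onb_def)
  have orth: "e \<in> E \<Longrightarrow> e' \<in> E \<Longrightarrow> cinner e e' = (if e = e' then 1 else 0)" for e e'
    using onbE by (auto simp: onb_def)
  have F2: "cinner (PB' *v u) (PB' *v v) = cinner u (M *v v)" if "u \<in> A'" "v \<in> A'" for u v
  proof -
    have "cinner (PB' *v u) (PB' *v v) = cinner u (PB' *v v)" by (rule PBsq)
    also have "\<dots> = cinner (PA' *v u) (PB' *v v)" using PAfix[OF that(1)] by simp
    also have "\<dots> = cinner u (M *v v)" by (simp add: Mv PAfix[OF that(2)] PAh)
    finally show ?thesis .
  qed
  have Mexp: "cinner u (M *v e) = complex_of_real (lam e) * cinner u e" if "e \<in> E" for u e
    using eig that by (simp add: cinner_scale_right)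
  have lamE: "lam e = (norm (PB' *v e))\<^sup>2" if "e \<in> E" for e
  proof -
    have "cinner (PB' *v e) (PB' *v e) = complex_of_real (lam e)"
      using F2[of e e] EA' that Mexp[OF that, of e] orth[OF that that] by auto
    thus ?thesis by (simp add: norm_sq_cinner)
  qed
  have lam0: "lam e \<ge> 0" if "e \<in> E" for e using lamE[OF that] by simp
  have lam1: "lam e \<le> 1" if "e \<in> E" for e
  proof -
    have "(norm e)\<^sup>2 = 1" using orth[OF that that] by (simp add: norm_sq_cinner)
    thus ?thesis using lamE[OF that] proj_norm_le[OF SB PB, of e] by simp
  qed
  have pars: "cinner x y = (\<Sum>e\<in>E. cnj (cinner e x) * cinner e y)" if "x \<in> A'" for x y
  proof -
    have "cinner x y = cinner (\<Sum>e\<in>E. cinner e x *s e) y" using expn that by metis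
    thus ?thesis by (simp add: cinner_sum_left cinner_scale_left)
  qed
  define EK where "EK = {e\<in>E. lam e \<ge> 1 - sqrt \<epsilon>}"
  have EKE: "EK \<subseteq> E" and finEK: "finite EK" using finE by (auto simp: EK_def)
  have lamK: "lam e \<ge> l0" "lam e > 0" if "e \<in> EK" for e
  proof -
    have "lam e \<ge> 1 - sqrt \<epsilon>" using that by (simp add: EK_def)
    thus "lam e \<ge> l0" "lam e > 0" using l0pos unfolding l0_def by linarith+
  qed
  define A where "A = {x\<in>A'. \<forall>e\<in>E - EK. cinner e x = 0}"
  have cA: "csubspace A" using SA unfolding A_def csubspace_def
    by (auto simp: cinner_add_right cinner_scale_right)
  have AA': "A \<subseteq> A'" by (auto simp: A_def)
  have restr: "(\<Sum>e\<in>E. f e) = (\<Sum>e\<in>EK. f e)" if "\<And>e. e \<in> E - EK \<Longrightarrow> f e = 0" for f :: "_ \<Rightarrow> complex"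
    by (rule sum.mono_neutral_right[OF finE EKE]) (use that in auto)
  have partA: "(norm (PB' *v v))\<^sup>2 \<ge> (1 - sqrt \<epsilon>) * (norm v)\<^sup>2" if vA: "v \<in> A" for v
  proof -
    have vA': "v \<in> A'" using vA by (auto simp: A_def)
    have "cinner (PB' *v v) (PB' *v v) = cinner v (M *v v)" using F2 vA' by blast
    also have "\<dots> = (\<Sum>e\<in>E. cnj (cinner e v) * cinner e (M *v v))" using pars vA' by blast
    also have "\<dots> = (\<Sum>e\<in>E. complex_of_real (lam e * (cmod (cinner e v))\<^sup>2))"
    proof (intro sum.cong refl)
      fix e assume e: "e \<in> E"
      have "cinner e (M *v v) = cinner (M *v e) v" using Mh unfolding herm_def by blast
      also have "\<dots> = complex_of_real (lam e) * cinner e v" using eig e by (simp add: cinner_scale_left)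
      finally have h: "cinner e (M *v v) = complex_of_real (lam e) * cinner e v" .
      show "cnj (cinner e v) * cinner e (M *v v) = complex_of_real (lam e * (cmod (cinner e v))\<^sup>2)"
        by (simp only: h of_real_mult cnj_mult_self[symmetric] mult_ac)
    qed
    finally have 1: "(norm (PB' *v v))\<^sup>2 = (\<Sum>e\<in>E. lam e * (cmod (cinner e v))\<^sup>2)"
      by (simp add: norm_sq_cinner)
    have "cinner v v = (\<Sum>e\<in>E. complex_of_real ((cmod (cinner e v))\<^sup>2))"
      using pars[OF vA'] by (simp add: cnj_mult_self)
    hence 2: "(norm v)\<^sup>2 = (\<Sum>e\<in>E. (cmod (cinner e v))\<^sup>2)" by (simp add: norm_sq_cinner)
    have "(1 - sqrt \<epsilon>) * (norm v)\<^sup>2 = (\<Sum>e\<in>E. (1 - sqrt \<epsilon>) * (cmod (cinner e v))\<^sup>2)"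
      by (simp add: 2 sum_distrib_left)
    also have "\<dots> \<le> (\<Sum>e\<in>E. lam e * (cmod (cinner e v))\<^sup>2)"
    proof (rule sum_mono)
      fix e assume e: "e \<in> E"
      show "(1 - sqrt \<epsilon>) * (cmod (cinner e v))\<^sup>2 \<le> lam e * (cmod (cinner e v))\<^sup>2"
      proof (cases "e \<in> EK")
        case True thus ?thesis by (intro mult_right_mono) (auto simp: EK_def)
      next
        case False thus ?thesis using vA e by (auto simp: A_def)
      qed
    qed
    finally show ?thesis using 1 by simp
  qed
  show ?thesis
  proof (intro exI[of _ A] conjI allI impI ballI cA AA' partA)
    fix PB
    assume PBp: "is_proj PB (cspan ((\<lambda>v. PB' *v v) ` A))"
    define B where "B = cspan ((\<lambda>v. PB' *v v) ` A)"
    have PBB: "is_proj PB B" using PBp by (simp add: B_def)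
    have Borth: "cinner b z = 0" if "b \<in> B" "\<And>v. v \<in> A \<Longrightarrow> cinner (PB' *v v) z = 0" for b z
      using cspan_orth[of "(\<lambda>v. PB' *v v) ` A" z b] that by (auto simp: B_def)
    have EKA: "e \<in> A" if "e \<in> EK" for e
      using that EKE EA' orth by (auto simp: A_def)
    define y where "y x = (\<Sum>e\<in>EK. (cinner (PB' *v e) x / complex_of_real (lam e)) *s (PB' *v e))" for x
    have PBform: "PB *v x = y x" for x
    proof (rule proj_unique'[OF PBB])
      show "y x \<in> B" unfolding y_def B_def
        by (rule cspan_sum[OF finEK]) (use EKA in auto)
      fix s assume sB: "s \<in> B"
      show "cinner s (x - y x) = 0"
      proof (rule Borth[OF sB])
        fix v assume vA: "v \<in> A"
        have vA': "v \<in> A'" using vA AA' by blast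
        have "cinner (PB' *v v) (y x) = (\<Sum>e\<in>EK. (cinner (PB' *v e) x / complex_of_real (lam e)) * cinner (PB' *v v) (PB' *v e))"
          by (simp add: y_def cinner_sum_right cinner_scale_right)
        also have "\<dots> = (\<Sum>e\<in>EK. cinner (PB' *v e) x * cinner v e)"
        proof (intro sum.cong refl)
          fix e assume e: "e \<in> EK"
          have eE: "e \<in> E" using e EKE by blast
          have "cinner (PB' *v v) (PB' *v e) = complex_of_real (lam e) * cinner v e"
            using F2[OF vA'] EA' eE Mexp[OF eE] by auto
          thus "(cinner (PB' *v e) x / complex_of_real (lam e)) * cinner (PB' *v v) (PB' *v e) =
                cinner (PB' *v e) x * cinner v e" using lamK[OF e] by simp
        qed
        also have "\<dots> = (\<Sum>e\<in>E. cnj (cinner e v) * cinner e (PB' *v x))"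
        proof -
          have "(\<Sum>e\<in>E. cnj (cinner e v) * cinner e (PB' *v x)) = (\<Sum>e\<in>EK. cnj (cinner e v) * cinner e (PB' *v x))"
            by (rule restr) (use vA in \<open>auto simp: A_def\<close>)
          also have "\<dots> = (\<Sum>e\<in>EK. cinner (PB' *v e) x * cinner v e)"
            by (intro sum.cong refl) (simp add: PBh cinner_commute[of v])
          finally show ?thesis by simp
        qed
        also have "\<dots> = cinner v (PB' *v x)" using pars[OF vA'] by simp
        also have "\<dots> = cinner (PB' *v v) x" by (rule PBh)
        finally show "cinner (PB' *v v) (x - y x) = 0" by (simp add: cinner_diff_right)
      qed
    qed
    show "loewner_le PB ((1 / (1 - sqrt \<epsilon>)) *\<^sub>R (PB' ** PA' ** PB'))"
      unfolding loewner_le_def psd_def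
    proof (intro allI)
      fix x
      define a where "a e = cinner (PB' *v e) x" for e
      define u where "u = PA' *v (PB' *v x)"
      have uA': "u \<in> A'" using PAin by (simp add: u_def)
      have ua: "cinner e u = a e" if "e \<in> E" for e
      proof -
        have "cinner e u = cinner (PA' *v e) (PB' *v x)" by (simp add: u_def PAh)
        also have "\<dots> = a e" using PAfix that EA' by (auto simp: a_def PBh)
        finally show ?thesis .
      qed
      have "cinner x ((PB' ** PA' ** PB') *v x) = cinner x (PB' *v u)"
        by (simp add: u_def matrix_vector_mul_assoc matrix_mul_assoc)
      also have "\<dots> = cinner (PB' *v x) u" by (rule PBh)
      also have "\<dots> = cinner u u" unfolding u_def by (rule PAsq[symmetric])
      also have "\<dots> = (\<Sum>e\<in>E. complex_of_real ((cmod (a e))\<^sup>2))"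
        using pars[OF uA', of u] ua by (simp add: cnj_mult_self)
      finally have N: "cinner x ((PB' ** PA' ** PB') *v x) = complex_of_real (\<Sum>e\<in>E. (cmod (a e))\<^sup>2)"
        by simp
      have "cinner x (PB *v x) = (\<Sum>e\<in>EK. (a e / complex_of_real (lam e)) * cinner x (PB' *v e))"
        by (simp add: PBform y_def cinner_sum_right cinner_scale_right a_def)
      also have "\<dots> = (\<Sum>e\<in>EK. complex_of_real ((cmod (a e))\<^sup>2 / lam e))"
        by (intro sum.cong refl) (simp add: a_def cinner_commute[of x] mult_cnj_sq)
      finally have Pq: "cinner x (PB *v x) = complex_of_real (\<Sum>e\<in>EK. (cmod (a e))\<^sup>2 / lam e)"
        by simp
      define S1 where "S1 = (\<Sum>e\<in>E. (cmod (a e))\<^sup>2)"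
      define S2 where "S2 = (\<Sum>e\<in>EK. (cmod (a e))\<^sup>2 / lam e)"
      have val: "cinner x (((1 / (1 - sqrt \<epsilon>)) *\<^sub>R (PB' ** PA' ** PB') - PB) *v x)
          = complex_of_real (S1 / l0 - S2)"
        by (simp add: matrix_vector_mult_diff_rdistrib scaleR_mv cinner_diff_right cinner_scale_right
            N Pq S1_def S2_def l0_def)
      have "S2 \<le> (\<Sum>e\<in>EK. (cmod (a e))\<^sup>2 / l0)" unfolding S2_def
        by (intro sum_mono divide_left_mono) (use lamK l0pos in auto)
      also have "\<dots> \<le> (\<Sum>e\<in>E. (cmod (a e))\<^sup>2 / l0)"
        by (rule sum_mono2[OF finE EKE]) (use l0pos in auto)
      also have "\<dots> = S1 / l0" by (simp add: S1_def sum_divide_distrib)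
      finally have "S1 / l0 - S2 \<ge> 0" by simp
      thus "Im (cinner x (((1 / (1 - sqrt \<epsilon>)) *\<^sub>R (PB' ** PA' ** PB') - PB) *v x)) = 0 \<and>
            0 \<le> Re (cinner x (((1 / (1 - sqrt \<epsilon>)) *\<^sub>R (PB' ** PA' ** PB') - PB) *v x))"
        by (simp add: val)
    qed
    fix \<rho> :: "complex^'n^'n"
    assume rho: "psd \<rho> \<and> Re (trace \<rho>) \<le> 1 \<and> range (\<lambda>x. \<rho> *v x) \<subseteq> A' \<and> Re (trace (\<rho> ** PB')) \<ge> 1 - \<epsilon>"
    have rpsd: "psd \<rho>" and rtr: "Re (trace \<rho>) \<le> 1" and rA: "\<And>x. \<rho> *v x \<in> A'"
      and rPB: "Re (trace (\<rho> ** PB')) \<ge> 1 - \<epsilon>" using rho by auto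
    have rh: "herm \<rho>" using psd_herm[OF rpsd] .
    have rexp: "\<rho> *v x = (\<Sum>e\<in>E. cinner (\<rho> *v e) x *s e)" for x
    proof -
      have "\<rho> *v x = (\<Sum>e\<in>E. cinner e (\<rho> *v x) *s e)" using expn rA by blast
      also have "\<dots> = (\<Sum>e\<in>E. cinner (\<rho> *v e) x *s e)" using rh by (simp add: herm_def)
      finally show ?thesis .
    qed
    have trX: "trace (\<rho> ** X) = (\<Sum>e\<in>E. cinner (\<rho> *v e) (X *v e))" for X
      by (rule trace_expand[OF finE rexp])
    define r where "r e = Re (cinner e (\<rho> *v e))" for e
    have r0: "r e \<ge> 0" for e using rpsd by (simp add: psd_def r_def)
    have rr: "cinner (\<rho> *v e) e = complex_of_real (r e)" for e
    proof -
      have "Im (cinner e (\<rho> *v e)) = 0" using rpsd by (simp add: psd_def)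
      hence "cinner e (\<rho> *v e) = complex_of_real (r e)" by (simp add: r_def complex_eq_iff)
      thus ?thesis using rh by (simp add: herm_def)
    qed
    have key: "cinner (\<rho> *v e) (PB' *v e) = complex_of_real (lam e * r e)" if e: "e \<in> E" for e
    proof -
      have eA': "e \<in> A'" using e EA' by blast
      have "cinner (\<rho> *v e) (PB' *v e) = cinner (PA' *v (\<rho> *v e)) (PB' *v e)" using PAfix[OF rA] by simp
      also have "\<dots> = cinner (\<rho> *v e) (M *v e)" by (simp add: PAh Mv PAfix[OF eA'])
      also have "\<dots> = complex_of_real (lam e) * complex_of_real (r e)" using Mexp[OF e] rr by simp
      finally show ?thesis by simp
    qed
    have tr1: "Re (trace \<rho>) = sum r E"
    proof -
      have "trace \<rho> = trace (\<rho> ** mat 1)" by simp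
      also have "\<dots> = (\<Sum>e\<in>E. complex_of_real (r e))" by (simp only: trX[of "mat 1"] matrix_vector_mul_lid rr)
      finally show ?thesis by simp
    qed
    have tr2: "Re (trace (\<rho> ** PB')) = (\<Sum>e\<in>E. lam e * r e)"
      by (simp add: trX key)
    have PBe: "PB *v e = (if e \<in> EK then PB' *v e else 0)" if e: "e \<in> E" for e
    proof -
      have eA': "e \<in> A'" using e EA' by blast
      have "PB *v e = (\<Sum>e'\<in>EK. (if e' = e then PB' *v e' else 0))"
        unfolding PBform y_def
      proof (intro sum.cong refl)
        fix e' assume e': "e' \<in> EK"
        have e'E: "e' \<in> E" using e' EKE by blast
        have "cinner (PB' *v e') e = cinner (PB' *v e') (PB' *v e)" using PBsq[of e' e] PBh[of e' e] by simp
        also have "\<dots> = complex_of_real (lam e) * cinner e' e" using F2 EA' e'E eA' Mexp[OF e] by auto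
        finally have c: "cinner (PB' *v e') e = (if e' = e then complex_of_real (lam e) else 0)"
          using orth[OF e'E e] by simp
        show "(cinner (PB' *v e') e / complex_of_real (lam e')) *s (PB' *v e') = (if e' = e then PB' *v e' else 0)"
          using c lamK(2)[OF e'] by (cases "e' = e") auto
      qed
      also have "\<dots> = (if e \<in> EK then PB' *v e else 0)" by (rule sum.delta[OF finEK])
      finally show ?thesis .
    qed
    have tr3: "Re (trace (\<rho> ** PB)) = (\<Sum>e\<in>EK. lam e * r e)"
    proof -
      have "trace (\<rho> ** PB) = (\<Sum>e\<in>E. if e \<in> EK then complex_of_real (lam e * r e) else 0)"
        unfolding trX by (intro sum.cong refl) (simp add: PBe key)
      also have "\<dots> = (\<Sum>e\<in>E. if lam e \<ge> 1 - sqrt \<epsilon> then complex_of_real (lam e * r e) else 0)"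
        unfolding EK_def by (intro sum.cong refl) auto
      also have "\<dots> = (\<Sum>e\<in>EK. complex_of_real (lam e * r e))"
        unfolding EK_def by (rule sum.inter_filter[OF finE, symmetric])
      finally show ?thesis by simp
    qed
    have fin: "(\<Sum>e\<in>EK. lam e * r e) \<ge> 1 - 2 * sqrt \<epsilon> \<and> (\<Sum>e\<in>EK. lam e * r e) > 0"
      unfolding EK_def
      by (rule arith_final[OF finE r0 lam0 lam1 _ _ assms(5,6)]) (use rtr tr1 rPB tr2 in auto)
    show "Re (trace (\<rho> ** PB)) \<ge> 1 - 2 * sqrt \<epsilon>" using fin tr3 by simp
    show "A \<noteq> {0}"
    proof
      assume A0: "A = {0}"
      have "EK \<noteq> {}" using fin by auto
      then obtain e where e: "e \<in> EK" by blast
      have "e \<in> A" using EKA[OF e] .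
      hence "e = 0" using A0 by simp
      moreover have "cinner e e = 1" using orth e EKE by auto
      ultimately show False by simp
    qed
  qed
qed


end
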